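(* Let $t,m$ be positive integers. Then for all non-negative integers $n$, \[ p_{mt,t}(n)= p(n)+\sum_{r=1}^{\infty}p\big(n-tr(2rm-m+2)\big)-\sum_{s=1}^{\infty}p\big(n-t(2s-1)(sm-m+1)\big). \]
   Context: $p(n)$ denotes the number of partitions of $n$ (non-increasing sequences of positive integers summing to $n$), with $p(0)=1$ and the convention $p(n)=0$ for negative integers $n$. For positive integers $A$ and $a$, and a partition $\lambda$, $\mathrm{mex}_{A,a}(\lambda)$ is the smallest positive integer congruent to $a$ modulo $A$ that is not a part of $\lambda$; $p_{A,a}(n)$ is the number of partitions $\lambda$ of $n$ with $\mathrm{mex}_{A,a}(\lambda)\equiv a\pmod{2A}$. *)

theory Defs
  imports Complex_Main "HOL-Number_Theory.Cong"
begin

definition partitions :: "nat \<Rightarrow> nat list set" where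
  "partitions n = {xs. sorted_wrt (\<ge>) xs \<and> (\<forall>x\<in>set xs. 0 < x) \<and> sum_list xs = n}"

definition partp :: "int \<Rightarrow> nat" where
  "partp k = (if k < 0 then 0 else card (partitions (nat k)))"

definition mex :: "nat \<Rightarrow> nat \<Rightarrow> nat list \<Rightarrow> nat" where
  "mex A a xs = (LEAST k. 0 < k \<and> [k = a] (mod A) \<and> k \<notin> set xs)"

definition pmex :: "nat \<Rightarrow> nat \<Rightarrow> nat \<Rightarrow> nat" where
  "pmex A a n = card {xs \<in> partitions n. [mex A a xs = a] (mod (2 * A))}"

end

theory Submission
  imports Defs "HOL-Library.Multiset"
begin

declare of_nat_sum_mset[simp del]

definition MSi :: "int \<Rightarrow> nat multiset set" where
  "MSi x = {M. (\<forall>y\<in>#M. 0 < y) \<and> int (sum_mset M) = x}"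

lemma desc_eq:
  assumes "sorted_wrt (\<ge>) xs" "sorted_wrt (\<ge>) ys" "mset xs = mset ys"
  shows "xs = (ys::nat list)"
proof -
  have "sorted (rev xs)" "sorted (rev ys)" using assms(1,2) by (simp_all add: sorted_wrt_rev)
  moreover have "mset (rev xs) = mset (rev ys)" using assms(3) by simp
  ultimately have "rev xs = rev ys" by (metis properties_for_sort)
  thus ?thesis by simp
qed

lemma bij_parts:
  "bij_betw mset {xs \<in> partitions n. P (set xs)} {M \<in> MSi (int n). P (set_mset M)}"
proof (rule bij_betw_imageI)
  show "inj_on mset {xs \<in> partitions n. P (set xs)}"
    unfolding inj_on_def partitions_def using desc_eq by blast
  show "mset ` {xs \<in> partitions n. P (set xs)} = {M \<in> MSi (int n). P (set_mset M)}"
  proof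
    show "mset ` {xs \<in> partitions n. P (set xs)} \<subseteq> {M \<in> MSi (int n). P (set_mset M)}"
      by (auto simp: partitions_def MSi_def sum_mset_sum_list)
  next
    show "{M \<in> MSi (int n). P (set_mset M)} \<subseteq> mset ` {xs \<in> partitions n. P (set xs)}"
    proof
      fix M assume M: "M \<in> {M \<in> MSi (int n). P (set_mset M)}"
      define xs where "xs = rev (sorted_list_of_multiset M)"
      have "mset xs = M" by (simp add: xs_def)
      moreover have "sorted_wrt (\<ge>) xs" unfolding xs_def
        by (simp add: sorted_wrt_rev)
      moreover have "sum_list xs = sum_mset M"
        by (metis \<open>mset xs = M\<close> sum_mset_sum_list)
      ultimately show "M \<in> mset ` {xs \<in> partitions n. P (set xs)}"
        using M by (auto simp: partitions_def MSi_def intro!: image_eqI[of _ _ xs])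
    qed
  qed
qed

lemma card_parts:
  "card {xs \<in> partitions n. P (set xs)} = card {M \<in> MSi (int n). P (set_mset M)}"
  using bij_betw_same_card[OF bij_parts] .

lemma partp_MSi: "partp x = card (MSi x)"
proof (cases "x < 0")
  case True
  then have "MSi x = {}" by (auto simp: MSi_def)
  then show ?thesis using True by (simp add: partp_def)
next
  case False
  have "card (partitions (nat x)) = card {xs \<in> partitions (nat x). True}" by simp
  also have "\<dots> = card {M \<in> MSi (int (nat x)). True}" by (rule card_parts)
  finally show ?thesis using False by (simp add: partp_def)
qed

lemma MSi_req:
  assumes "finite F" "\<forall>k\<in>F. 0 < k"
  shows "card {M \<in> MSi x. F \<subseteq> set_mset M} = partp (x - int (\<Sum>F))"
  using assms
proof (induction F arbitrary: x rule: finite_induct)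
  case empty
  then show ?case by (simp add: partp_MSi)
next
  case (insert k F)
  have k: "0 < k" using insert by auto
  have "bij_betw (\<lambda>M. M - {#k#}) {M \<in> MSi x. insert k F \<subseteq> set_mset M}
          {M \<in> MSi (x - int k). F \<subseteq> set_mset M}"
  proof (rule bij_betw_byWitness[where f' = "\<lambda>M. add_mset k M"])
    show "\<forall>a\<in>{M \<in> MSi x. insert k F \<subseteq> set_mset M}. add_mset k (a - {#k#}) = a"
      by simp
    show "\<forall>a\<in>{M \<in> MSi (x - int k). F \<subseteq> set_mset M}. add_mset k a - {#k#} = a" by simp
    show "(\<lambda>M. M - {#k#}) ` {M \<in> MSi x. insert k F \<subseteq> set_mset M}
          \<subseteq> {M \<in> MSi (x - int k). F \<subseteq> set_mset M}"
    proof safe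
      fix M assume M: "M \<in> MSi x" "insert k F \<subseteq> set_mset M"
      then have km: "k \<in># M" by auto
      have e: "sum_mset (add_mset k (M - {#k#})) = k + sum_mset (M - {#k#})" by simp
      have "sum_mset M = k + sum_mset (M - {#k#})" using e km by (simp only: insert_DiffM)
      moreover have "\<forall>y\<in>#M - {#k#}. 0 < y" using M(1) unfolding MSi_def by (auto dest: in_diffD)
      ultimately show "M - {#k#} \<in> MSi (x - int k)" using M(1) unfolding MSi_def by simp
      fix y assume "y \<in> F"
      then have "y \<noteq> k" "y \<in># M" using insert M by auto
      then show "y \<in># M - {#k#}" by (simp add: in_diff_count)
    qed
    show "(\<lambda>M. add_mset k M) ` {M \<in> MSi (x - int k). F \<subseteq> set_mset M}
          \<subseteq> {M \<in> MSi x. insert k F \<subseteq> set_mset M}"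
      using k by (auto simp: MSi_def)
  qed
  then have "card {M \<in> MSi x. insert k F \<subseteq> set_mset M} = card {M \<in> MSi (x - int k). F \<subseteq> set_mset M}"
    by (rule bij_betw_same_card)
  also have "\<dots> = partp (x - int k - int (\<Sum>F))" using insert by auto
  finally show ?case using insert by (simp add: algebra_simps)
qed

lemma parts_req:
  assumes "finite F" "\<forall>k\<in>F. 0 < k"
  shows "card {xs \<in> partitions n. F \<subseteq> set xs} = partp (int n - int (\<Sum>F))"
  using card_parts[of n "\<lambda>S. F \<subseteq> S"] MSi_req[OF assms] by simp

lemma finite_partitions: "finite (partitions n)"
proof -
  have "partitions n \<subseteq> {xs. set xs \<subseteq> {..n} \<and> length xs \<le> n}"
  proof
    fix xs assume xs: "xs \<in> partitions n"
    then have pos: "\<forall>x\<in>set xs. 0 < x" and s: "sum_list xs = n" by (auto simp: partitions_def)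
    have "set xs \<subseteq> {..n}" using s member_le_sum_list by fastforce
    moreover have "length xs \<le> sum_list xs" using pos by (induction xs) auto
    ultimately show "xs \<in> {xs. set xs \<subseteq> {..n} \<and> length xs \<le> n}" using s by simp
  qed
  then show ?thesis by (rule finite_subset[OF _ finite_lists_length_le]) simp
qed

definition aa :: "nat \<Rightarrow> nat \<Rightarrow> nat \<Rightarrow> nat" where
  "aa t m j = t * (1 + j * m)"

definition SS :: "nat \<Rightarrow> nat \<Rightarrow> nat \<Rightarrow> nat" where
  "SS t m k = (\<Sum>i<k. aa t m i)"

definition CC :: "nat \<Rightarrow> nat \<Rightarrow> nat \<Rightarrow> nat \<Rightarrow> nat list set" where
  "CC t m n j = {xs \<in> partitions n. aa t m ` {..<j} \<subseteq> set xs}"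

definition idx :: "nat \<Rightarrow> nat \<Rightarrow> nat list \<Rightarrow> nat" where
  "idx t m xs = (LEAST j. aa t m j \<notin> set xs)"

lemma aa_mono: "0 < t \<Longrightarrow> 0 < m \<Longrightarrow> i < j \<Longrightarrow> aa t m i < aa t m j"
  unfolding aa_def by simp

lemma aa_inj: "0 < t \<Longrightarrow> 0 < m \<Longrightarrow> inj (aa t m)"
proof (rule injI)
  fix x y assume t: "0 < t" and m: "0 < m" and e: "aa t m x = aa t m y"
  show "x = y"
  proof (rule ccontr)
    assume "x \<noteq> y"
    then consider "x < y" | "y < x" by linarith
    then show False
    proof cases
      case 1 then show False using aa_mono[OF t m 1] e by simp
    next
      case 2 then show False using aa_mono[OF t m 2] e by simp
    qed
  qed
qed

lemma aa_pos: "0 < t \<Longrightarrow> 0 < aa t m j"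
  unfolding aa_def by simp

lemma card_CC:
  assumes "0 < t" "0 < m"
  shows "card (CC t m n j) = partp (int n - int (SS t m j))"
proof -
  have "card (CC t m n j) = partp (int n - int (\<Sum>(aa t m ` {..<j})))"
    unfolding CC_def by (rule parts_req) (use aa_pos[OF assms(1)] in auto)
  also have "\<Sum>(aa t m ` {..<j}) = SS t m j"
  proof -
    have "inj_on (aa t m) {..<j}" using aa_inj[OF assms] by (rule inj_on_subset) simp
    then show ?thesis unfolding SS_def by (simp add: sum.reindex)
  qed
  finally show ?thesis .
qed

lemma SS_ge: "0 < t \<Longrightarrow> k \<le> SS t m k"
proof -
  assume t: "0 < t"
  have "(\<Sum>i<k. 1) \<le> (\<Sum>i<k. aa t m i)"
    by (rule sum_mono) (use aa_pos[OF t] in \<open>simp add: Suc_le_eq\<close>)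
  then show ?thesis by (simp add: SS_def)
qed

lemma SS_even: "int (SS t m (2 * r)) = int t * int r * (2 * int r * int m - int m + 2)"
proof (induction r)
  case 0 then show ?case by (simp add: SS_def)
next
  case (Suc r)
  have "SS t m (2 * Suc r) = SS t m (2 * r) + aa t m (2 * r) + aa t m (Suc (2 * r))"
    by (simp add: SS_def)
  then have "int (SS t m (2 * Suc r)) = int (SS t m (2 * r)) + int (aa t m (2 * r)) + int (aa t m (Suc (2 * r)))"
    by simp
  also have "\<dots> = int t * int r * (2 * int r * int m - int m + 2) + int t * (1 + 2 * int r * int m)
      + int t * (1 + (2 * int r + 1) * int m)" using Suc by (simp add: aa_def algebra_simps)
  also have "\<dots> = int t * int (Suc r) * (2 * int (Suc r) * int m - int m + 2)"
    by (simp add: algebra_simps)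
  finally show ?case .
qed

lemma SS_odd: "int (SS t m (Suc (2 * s))) = int t * (2 * int (Suc s) - 1) * (int (Suc s) * int m - int m + 1)"
proof -
  have "SS t m (Suc (2 * s)) = SS t m (2 * s) + aa t m (2 * s)" by (simp add: SS_def)
  then have "int (SS t m (Suc (2 * s))) = int t * int s * (2 * int s * int m - int m + 2) + int t * (1 + 2 * int s * int m)"
    using SS_even[of t m s] by (simp add: aa_def algebra_simps)
  also have "\<dots> = int t * (2 * int (Suc s) - 1) * (int (Suc s) * int m - int m + 1)"
    by (simp add: algebra_simps)
  finally show ?thesis .
qed

lemma aa_cong_iff:
  assumes "0 < k" "0 < t" "0 < m"
  shows "[k = t] (mod (m * t)) \<longleftrightarrow> (\<exists>j. k = aa t m j)"
proof
  assume c: "[k = t] (mod (m * t))"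
  have "t \<le> k"
  proof (rule ccontr)
    assume "\<not> t \<le> k"
    then have kt: "k \<le> t" by simp
    have "[t = k] (mod (m * t))" using c by (rule cong_sym)
    then have "m * t dvd t - k" using cong_altdef_nat kt by blast
    moreover have "0 < t - k" using \<open>\<not> t \<le> k\<close> by simp
    moreover have "t - k < t" using \<open>\<not> t \<le> k\<close> assms(1) by simp
    moreover have "t \<le> m * t" using assms(3) by simp
    ultimately show False by (meson nat_dvd_not_less less_le_trans)
  qed
  then have "m * t dvd k - t" using c cong_altdef_nat by blast
  then obtain q where "k - t = m * t * q" by (auto elim: dvdE)
  then have "k = aa t m q" using \<open>t \<le> k\<close> by (simp add: aa_def algebra_simps)
  then show "\<exists>j. k = aa t m j" ..
next
  assume "\<exists>j. k = aa t m j"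
  then obtain j where "k = aa t m j" ..
  then have "k = t + (m * t) * j" by (simp add: aa_def algebra_simps)
  then show "[k = t] (mod (m * t))" by (simp add: cong_def)
qed

lemma idx_ex:
  assumes "xs \<in> partitions n" "0 < t" "0 < m"
  shows "aa t m n \<notin> set xs"
proof
  assume "aa t m n \<in> set xs"
  then have "aa t m n \<le> n" using assms member_le_sum_list by (fastforce simp: partitions_def)
  moreover have "n < aa t m n"
  proof -
    have "n \<le> n * m" using assms(3) by simp
    then have "n < 1 + n * m" by linarith
    also have "\<dots> \<le> t * (1 + n * m)" using assms(2) mult_le_mono1[of 1 t "1 + n * m"] by simp
    finally show ?thesis by (simp add: aa_def)
  qed
  ultimately show False by simp
qed

lemma idx_le:
  assumes "xs \<in> partitions n" "0 < t" "0 < m"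
  shows "idx t m xs \<le> n"
  unfolding idx_def using idx_ex[OF assms] by (rule Least_le)

lemma idx_iff:
  assumes "xs \<in> partitions n" "0 < t" "0 < m"
  shows "idx t m xs = j \<longleftrightarrow> aa t m ` {..<j} \<subseteq> set xs \<and> aa t m j \<notin> set xs"
proof
  assume "idx t m xs = j"
  then show "aa t m ` {..<j} \<subseteq> set xs \<and> aa t m j \<notin> set xs"
  proof -
    have 1: "aa t m (LEAST j. aa t m j \<notin> set xs) \<notin> set xs"
      by (rule LeastI[of _ n]) (rule idx_ex[OF assms])
    have 2: "aa t m i \<in> set xs" if "i < (LEAST j. aa t m j \<notin> set xs)" for i
      using not_less_Least[OF that] by blast
    show ?thesis using 1 2 \<open>idx t m xs = j\<close> unfolding idx_def by auto
  qed
next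
  assume h: "aa t m ` {..<j} \<subseteq> set xs \<and> aa t m j \<notin> set xs"
  show "idx t m xs = j" unfolding idx_def
  proof (rule Least_equality)
    show "aa t m j \<notin> set xs" using h by simp
    fix y assume "aa t m y \<notin> set xs"
    then show "j \<le> y" using h by (meson image_subset_iff lessThan_iff not_le)
  qed
qed

lemma mex_idx:
  assumes "xs \<in> partitions n" "0 < t" "0 < m"
  shows "mex (m * t) t xs = aa t m (idx t m xs)"
proof -
  have eq: "(0 < k \<and> [k = t] (mod (m * t)) \<and> k \<notin> set xs) \<longleftrightarrow> (\<exists>j. k = aa t m j \<and> k \<notin> set xs)" for k
  proof
    assume "0 < k \<and> [k = t] (mod (m * t)) \<and> k \<notin> set xs"
    then show "\<exists>j. k = aa t m j \<and> k \<notin> set xs" using aa_cong_iff[of k t m] assms by auto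
  next
    assume "\<exists>j. k = aa t m j \<and> k \<notin> set xs"
    then obtain j where j: "k = aa t m j" "k \<notin> set xs" by blast
    then have "0 < k" using aa_pos[OF assms(2)] by simp
    then show "0 < k \<and> [k = t] (mod (m * t)) \<and> k \<notin> set xs" using aa_cong_iff[of k t m] assms j by auto
  qed
  have "(LEAST k. 0 < k \<and> [k = t] (mod (m * t)) \<and> k \<notin> set xs) = aa t m (idx t m xs)"
    unfolding eq
  proof (rule Least_equality)
    have "aa t m (idx t m xs) \<notin> set xs" unfolding idx_def using idx_ex[OF assms(1,2,3)] by (rule LeastI)
    then show "\<exists>j. aa t m (idx t m xs) = aa t m j \<and> aa t m (idx t m xs) \<notin> set xs" by blast
    fix y assume "\<exists>j. y = aa t m j \<and> y \<notin> set xs"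
    then obtain j where j: "y = aa t m j" "aa t m j \<notin> set xs" by blast
    then have "idx t m xs \<le> j" unfolding idx_def by (intro Least_le) simp
    then show "aa t m (idx t m xs) \<le> y" using j aa_mono[OF assms(2,3)]
      by (metis le_eq_less_or_eq less_imp_le)
  qed
  then show ?thesis by (simp add: mex_def)
qed

lemma mex_even:
  assumes "0 < t" "0 < m"
  shows "[aa t m j = t] (mod (2 * (m * t))) \<longleftrightarrow> even j"
proof -
  have "aa t m j = t + j * (m * t)" by (simp add: aa_def algebra_simps)
  then have "[aa t m j = t] (mod (2 * (m * t))) \<longleftrightarrow> 2 * (m * t) dvd j * (m * t)"
    by (simp add: cong_altdef_nat)
  also have "\<dots> \<longleftrightarrow> 2 dvd j" using assms by simp
  finally show ?thesis .
qed

theorem theorem3p1: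
  fixes t m n :: nat
  assumes "0 < t" and "0 < m"
  shows "real (pmex (m * t) t n) =
           real (partp (int n))
         + (\<Sum>r. real (partp (int n - int t * int (Suc r) * (2 * int (Suc r) * int m - int m + 2))))
         - (\<Sum>s. real (partp (int n - int t * (2 * int (Suc s) - 1) * (int (Suc s) * int m - int m + 1))))"
proof -
  define N where "N j = real (partp (int n - int (SS t m j)))" for j
  define K where "K = Suc n"
  have N0: "N j = 0" if "n < j" for j
  proof -
    have "j \<le> SS t m j" by (rule SS_ge[OF assms(1)])
    then have "int n - int (SS t m j) < 0" using that by simp
    then show ?thesis by (simp add: N_def partp_def)
  qed
  have finC: "finite (CC t m n j)" for j
    using finite_partitions[of n] by (rule rev_finite_subset) (auto simp: CC_def)
  have sub: "CC t m n (Suc j) \<subseteq> CC t m n j" for j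
    by (auto simp: CC_def lessThan_Suc)
  have E: "{xs \<in> partitions n. idx t m xs = j} = CC t m n j - CC t m n (Suc j)" for j
  proof -
    have "xs \<in> {xs \<in> partitions n. idx t m xs = j} \<longleftrightarrow> xs \<in> CC t m n j - CC t m n (Suc j)" for xs
    proof (cases "xs \<in> partitions n")
      case True then show ?thesis using idx_iff[OF True assms, of j] by (auto simp: CC_def lessThan_Suc)
    next
      case False then show ?thesis by (simp add: CC_def)
    qed
    then show ?thesis by blast
  qed
  have cardE: "real (card {xs \<in> partitions n. idx t m xs = j}) = N j - N (Suc j)" for j
  proof -
    have "card {xs \<in> partitions n. idx t m xs = j} = card (CC t m n j) - card (CC t m n (Suc j))"
      unfolding E by (rule card_Diff_subset[OF finC sub])
    moreover have "card (CC t m n (Suc j)) \<le> card (CC t m n j)" by (rule card_mono[OF finC sub])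
    ultimately show ?thesis by (simp add: N_def card_CC[OF assms] of_nat_diff)
  qed
  have pm: "pmex (m * t) t n = card {xs \<in> partitions n. even (idx t m xs)}"
    unfolding pmex_def using mex_idx[OF _ assms] mex_even[OF assms]
    by (intro arg_cong[where f = card]) auto
  have U: "{xs \<in> partitions n. even (idx t m xs)} = (\<Union>i<K. {xs \<in> partitions n. idx t m xs = 2 * i})"
  proof safe
    fix xs assume xs: "xs \<in> partitions n" "even (idx t m xs)"
    then have "idx t m xs = 2 * (idx t m xs div 2)" by simp
    moreover have "idx t m xs div 2 < K" using idx_le[OF xs(1) assms] by (simp add: K_def)
    ultimately show "xs \<in> (\<Union>i<K. {xs \<in> partitions n. idx t m xs = 2 * i})" using xs by blast
  qed auto
  have "card {xs \<in> partitions n. even (idx t m xs)} = (\<Sum>i<K. card {xs \<in> partitions n. idx t m xs = 2 * i})"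
    unfolding U by (rule card_UN_disjoint) (use finite_partitions[of n] in auto)
  then have pm2: "real (pmex (m * t) t n) = (\<Sum>i<K. N (2 * i) - N (Suc (2 * i)))"
    unfolding pm by (simp add: cardE)
  have tele: "(\<Sum>i<k. N (2 * i) - N (Suc (2 * i))) =
      N 0 + (\<Sum>r<k. N (2 * Suc r)) - (\<Sum>s<k. N (Suc (2 * s))) - N (2 * k)" for k
    by (induction k) (simp_all add: algebra_simps)
  have s1: "(\<Sum>r. real (partp (int n - int t * int (Suc r) * (2 * int (Suc r) * int m - int m + 2))))
        = (\<Sum>r<K. N (2 * Suc r))"
  proof -
    have "(\<lambda>r. real (partp (int n - int t * int (Suc r) * (2 * int (Suc r) * int m - int m + 2))))
        = (\<lambda>r. N (2 * Suc r))"
      by (rule ext) (simp only: N_def SS_even)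
    moreover have "suminf (\<lambda>r. N (2 * Suc r)) = (\<Sum>r<K. N (2 * Suc r))"
      by (rule suminf_finite) (auto simp: K_def intro!: N0)
    ultimately show ?thesis by simp
  qed
  have s2: "(\<Sum>s. real (partp (int n - int t * (2 * int (Suc s) - 1) * (int (Suc s) * int m - int m + 1))))
        = (\<Sum>s<K. N (Suc (2 * s)))"
  proof -
    have "(\<lambda>s. real (partp (int n - int t * (2 * int (Suc s) - 1) * (int (Suc s) * int m - int m + 1))))
        = (\<lambda>s. N (Suc (2 * s)))"
      by (rule ext) (simp only: N_def SS_odd)
    moreover have "suminf (\<lambda>s. N (Suc (2 * s))) = (\<Sum>s<K. N (Suc (2 * s)))"
      by (rule suminf_finite) (auto simp: K_def intro!: N0)
    ultimately show ?thesis by simp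
  qed
  have "N (2 * K) = 0" by (rule N0) (simp add: K_def)
  moreover have "N 0 = real (partp (int n))" by (simp add: N_def SS_def)
  ultimately show ?thesis unfolding s1 s2 pm2 tele by simp
qed

end
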